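(* Let $z,z',\ell \in \mathbb{N}$ and let $x\in \mathbb{R}^{z}$ and $x'\in \mathbb{R}^{z'}$ be two time series with the same set of $\ell$-profiles, i.e. $D_{(x,\ell)} = D_{(x',\ell)}$. Then for every $y \in \mathbb{R}^\ell$ we have $\mathbf{d}_{dF}(x,y) = \mathbf{d}_{dF}(x',y)$.
   Context: A traversal between sequences of lengths $z$ and $\ell$ is a sequence of index pairs $(i_1,j_1),\dots,(i_t,j_t)$ with $(i_1,j_1)=(1,1)$, $(i_t,j_t)=(z,\ell)$, and for $r<t$: $i_{r+1}-i_r\in\{0,1\}$, $j_{r+1}-j_r\in\{0,1\}$, $(i_{r+1}-i_r)+(j_{r+1}-j_r)\ge1$; $\mathcal{T}_{z,\ell}$ is the set of traversals. For $x\in\mathbb{R}^z$, $y\in\mathbb{R}^\ell$: $\mathbf{d}_{dF}(x,y)=\min_{T\in\mathcal{T}_{z,\ell}}\max_{(i,j)\in T}|x_i-y_j|$. For $x\in\mathbb{R}^z$ and $T\in\mathcal{T}_{z,\ell}$, the traversal sectors are $S_j^{(x,T)}=\{x_i: i\in[z],(i,j)\in T\}$ for $j\in[\ell]$, and the $\ell$-profile of $(x,T)$ is the sequence $\big((\min S_1^{(x,T)},\max S_1^{(x,T)}),\dots,(\min S_\ell^{(x,T)},\max S_\ell^{(x,T)})\big)$. $D_{(x,\ell)}$ is the set of all $\ell$-profiles of $(x,T)$ over all $T\in\mathcal{T}_{z,\ell}$. *)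

theory Defs
  imports Complex_Main
begin

text \<open>Time series are real lists; indices are 1-based as in the paper:
  entry i of x is x ! (i - 1). A traversal is a list of index pairs.\<close>

definition traversal :: "nat \<Rightarrow> nat \<Rightarrow> (nat \<times> nat) list \<Rightarrow> bool" where
  "traversal z l T \<longleftrightarrow>
     T \<noteq> [] \<and> hd T = (1, 1) \<and> last T = (z, l) \<and>
     (\<forall>r. Suc r < length T \<longrightarrow>
        (let (i, j) = T ! r; (i', j') = T ! Suc r in
          (i' = i \<or> i' = i + 1) \<and> (j' = j \<or> j' = j + 1) \<and> (i', j') \<noteq> (i, j)))"

definition traversals :: "nat \<Rightarrow> nat \<Rightarrow> (nat \<times> nat) list set" where
  "traversals z l = {T. traversal z l T}"

definition dF :: "real list \<Rightarrow> real list \<Rightarrow> real" where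
  "dF x y = Min ((\<lambda>T. Max ((\<lambda>(i, j). \<bar>x ! (i - 1) - y ! (j - 1)\<bar>) ` set T))
                  ` traversals (length x) (length y))"

definition sector :: "real list \<Rightarrow> (nat \<times> nat) list \<Rightarrow> nat \<Rightarrow> real set" where
  "sector x T j = {x ! (i - 1) | i. 1 \<le> i \<and> i \<le> length x \<and> (i, j) \<in> set T}"

definition profile :: "real list \<Rightarrow> nat \<Rightarrow> (nat \<times> nat) list \<Rightarrow> (real \<times> real) list" where
  "profile x l T = map (\<lambda>j. (Min (sector x T j), Max (sector x T j))) [1..<l + 1]"

definition profiles :: "real list \<Rightarrow> nat \<Rightarrow> (real \<times> real) list set" where
  "profiles x l = profile x l ` traversals (length x) l"

end

theory Submission
  imports Defs
begin

lemma trav_step: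
  assumes "traversal z l T" "Suc r < length T"
  shows "(fst (T!Suc r) = fst (T!r) \<or> fst (T!Suc r) = fst (T!r) + 1) \<and>
         (snd (T!Suc r) = snd (T!r) \<or> snd (T!Suc r) = snd (T!r) + 1)"
proof -
  have "(let (i, j) = T ! r; (i', j') = T ! Suc r in
          (i' = i \<or> i' = i + 1) \<and> (j' = j \<or> j' = j + 1) \<and> (i', j') \<noteq> (i, j))"
    using assms unfolding traversal_def by blast
  then show ?thesis
    by (cases "T!r"; cases "T ! Suc r") (auto simp: Let_def)
qed

lemma trav_mono:
  assumes "traversal z l T" "s < length T" "r \<le> s"
  shows "fst (T!r) \<le> fst (T!s) \<and> snd (T!r) \<le> snd (T!s)"
  using assms(2,3)
proof (induction s)
  case 0
  then show ?case by simp
next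
  case (Suc s)
  show ?case
  proof (cases "r = Suc s")
    case True
    then show ?thesis by simp
  next
    case False
    then have "r \<le> s" using Suc by simp
    with Suc have "fst (T!r) \<le> fst (T!s) \<and> snd (T!r) \<le> snd (T!s)" by simp
    moreover have "(fst (T!Suc s) = fst (T!s) \<or> fst (T!Suc s) = fst (T!s) + 1) \<and>
         (snd (T!Suc s) = snd (T!s) \<or> snd (T!Suc s) = snd (T!s) + 1)"
      using trav_step[OF assms(1) Suc.prems(1)] .
    ultimately show ?thesis by auto
  qed
qed

lemma trav_ends:
  assumes "traversal z l T"
  shows "T ! 0 = (1,1)" "T ! (length T - 1) = (z, l)" "length T > 0"
  using assms unfolding traversal_def
  by (auto simp: hd_conv_nth last_conv_nth)

lemma trav_range:
  assumes "traversal z l T" "(i,j) \<in> set T"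
  shows "1 \<le> i \<and> i \<le> z \<and> 1 \<le> j \<and> j \<le> l"
proof -
  obtain r where r: "r < length T" "T ! r = (i,j)" using assms(2) by (auto simp: in_set_conv_nth)
  have a: "fst (T!0) \<le> fst (T!r) \<and> snd (T!0) \<le> snd (T!r)"
    using trav_mono[OF assms(1) r(1)] by simp
  have b: "fst (T!r) \<le> fst (T!(length T - 1)) \<and> snd (T!r) \<le> snd (T!(length T - 1))"
    using trav_mono[OF assms(1), of "length T - 1" r] r(1) by simp
  show ?thesis using a b r trav_ends[OF assms(1)] by simp
qed

lemma trav_cover_aux:
  assumes "traversal z l T" "k < length T" "snd (T!0) \<le> j" "j \<le> snd (T!k)"
  shows "\<exists>r\<le>k. snd (T!r) = j"
  using assms(2,4)
proof (induction k)
  case 0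
  then show ?case using assms(3) by auto
next
  case (Suc k)
  show ?case
  proof (cases "j \<le> snd (T!k)")
    case True
    with Suc show ?thesis by (metis Suc_lessD le_SucI)
  next
    case False
    with trav_step[OF assms(1) Suc.prems(1)] Suc.prems(2) show ?thesis by auto
  qed
qed

lemma trav_cover:
  assumes "traversal z l T" "1 \<le> j" "j \<le> l"
  shows "\<exists>i. (i,j) \<in> set T"
proof -
  have "\<exists>r\<le>length T - 1. snd (T!r) = j"
    using trav_cover_aux[OF assms(1), of "length T - 1" j] trav_ends[OF assms(1)] assms by simp
  then obtain r where "r \<le> length T - 1" "snd (T!r) = j" by blast
  moreover have "length T > 0" using trav_ends[OF assms(1)] by simp
  ultimately have "r < length T" "snd (T!r) = j" by linarith+
  then show ?thesis by (metis nth_mem prod.collapse)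
qed

lemma Max_eq_dom:
  fixes A B :: "real set"
  assumes "finite A" "A \<noteq> {}" "finite B" "B \<noteq> {}"
    "\<forall>a\<in>A. \<exists>b\<in>B. a \<le> b" "\<forall>b\<in>B. \<exists>a\<in>A. b \<le> a"
  shows "Max A = Max B"
proof (rule antisym)
  show "Max A \<le> Max B" using assms by (meson Max_ge Max_le_iff order_trans)
  show "Max B \<le> Max A" using assms by (meson Max_ge Max_le_iff order_trans)
qed

lemma abs_between:
  fixes m v M c :: real
  assumes "m \<le> v" "v \<le> M"
  shows "\<bar>v - c\<bar> \<le> max \<bar>m - c\<bar> \<bar>M - c\<bar>"
  using assms by (auto simp: abs_le_iff le_max_iff_disj)

definition Gf :: "real list \<Rightarrow> nat \<Rightarrow> (real \<times> real) list \<Rightarrow> real" where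
  "Gf y l p = Max ((\<lambda>j. max \<bar>fst (p!(j-1)) - y!(j-1)\<bar> \<bar>snd (p!(j-1)) - y!(j-1)\<bar>) ` {1..l})"

lemma cost_eq:
  assumes T: "traversal (length x) l T" and ly: "length y = l"
  shows "Max ((\<lambda>(i, j). \<bar>x ! (i - 1) - y ! (j - 1)\<bar>) ` set T) = Gf y l (profile x l T)"
proof -
  define g where "g = (\<lambda>j. max \<bar>fst (profile x l T!(j-1)) - y!(j-1)\<bar> \<bar>snd (profile x l T!(j-1)) - y!(j-1)\<bar>)"
  have pj: "profile x l T ! (j-1) = (Min (sector x T j), Max (sector x T j))" if "1 \<le> j" "j \<le> l" for j
  proof -
    have "[1..<l+1] ! (j-1) = j" using that by (subst nth_upt) auto
    then show ?thesis using that unfolding profile_def by (simp del: upt_Suc)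
  qed
  have fin: "finite (sector x T j)" for j
  proof -
    have "sector x T j \<subseteq> (\<lambda>i. x ! (i - 1)) ` {1..length x}" unfolding sector_def by auto
    then show ?thesis by (rule finite_subset) simp
  qed
  have ne: "sector x T j \<noteq> {}" if jj: "1 \<le> j" "j \<le> l" for j
  proof -
    obtain i where "(i,j) \<in> set T" using trav_cover[OF T jj] by blast
    with trav_range[OF T this] show ?thesis unfolding sector_def by blast
  qed
  have "l \<ge> 1"
  proof -
    have "T ! 0 \<in> set T" using trav_ends(3)[OF T] by simp
    then have "(1,1) \<in> set T" using trav_ends(1)[OF T] by simp
    then show ?thesis using trav_range[OF T] by blast
  qed
  have "Max ((\<lambda>(i, j). \<bar>x ! (i - 1) - y ! (j - 1)\<bar>) ` set T) = Max (g ` {1..l})"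
  proof (rule Max_eq_dom)
    show "finite ((\<lambda>(i, j). \<bar>x ! (i - 1) - y ! (j - 1)\<bar>) ` set T)" by simp
    show "(\<lambda>(i, j). \<bar>x ! (i - 1) - y ! (j - 1)\<bar>) ` set T \<noteq> {}" using trav_ends[OF T] by auto
    show "finite (g ` {1..l})" by simp
    show "g ` {1..l} \<noteq> {}" using \<open>l \<ge> 1\<close> by auto
    show "\<forall>a\<in>(\<lambda>(i, j). \<bar>x ! (i - 1) - y ! (j - 1)\<bar>) ` set T. \<exists>b\<in>g ` {1..l}. a \<le> b"
    proof
      fix a assume "a \<in> (\<lambda>(i, j). \<bar>x ! (i - 1) - y ! (j - 1)\<bar>) ` set T"
      then obtain i j where ij: "(i,j) \<in> set T" "a = \<bar>x ! (i - 1) - y ! (j - 1)\<bar>" by auto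
      note rg = trav_range[OF T ij(1)]
      have mem: "x ! (i-1) \<in> sector x T j" unfolding sector_def using rg ij by auto
      have "Min (sector x T j) \<le> x ! (i-1)" "x ! (i-1) \<le> Max (sector x T j)"
        using mem fin[of j] by auto
      then have "a \<le> max \<bar>Min (sector x T j) - y!(j-1)\<bar> \<bar>Max (sector x T j) - y!(j-1)\<bar>"
        unfolding ij(2) by (rule abs_between)
      then have "a \<le> g j" unfolding g_def using pj rg by simp
      moreover have "g j \<in> g ` {1..l}" using rg by simp
      ultimately show "\<exists>b\<in>g ` {1..l}. a \<le> b" by blast
    qed
    show "\<forall>b\<in>g ` {1..l}. \<exists>a\<in>(\<lambda>(i, j). \<bar>x ! (i - 1) - y ! (j - 1)\<bar>) ` set T. b \<le> a"
    proof
      fix b assume "b \<in> g ` {1..l}"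
      then obtain j where j: "1 \<le> j" "j \<le> l" "b = g j" by auto
      have m1: "Min (sector x T j) \<in> sector x T j" using Min_in[OF fin ne[OF j(1,2)]] .
      have m2: "Max (sector x T j) \<in> sector x T j" using Max_in[OF fin ne[OF j(1,2)]] .
      obtain i1 where i1: "(i1,j) \<in> set T" "Min (sector x T j) = x ! (i1 - 1)"
        using m1 unfolding sector_def by auto
      obtain i2 where i2: "(i2,j) \<in> set T" "Max (sector x T j) = x ! (i2 - 1)"
        using m2 unfolding sector_def by auto
      have beq: "b = max \<bar>x ! (i1 - 1) - y!(j-1)\<bar> \<bar>x ! (i2 - 1) - y!(j-1)\<bar>"
        unfolding j(3) g_def pj[OF j(1,2)] using i1 i2 by simp
      then show "\<exists>a\<in>(\<lambda>(i, j). \<bar>x ! (i - 1) - y ! (j - 1)\<bar>) ` set T. b \<le> a"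
      proof (cases "\<bar>x ! (i1 - 1) - y!(j-1)\<bar> \<le> \<bar>x ! (i2 - 1) - y!(j-1)\<bar>")
        case True
        have "b \<le> \<bar>x ! (i2 - 1) - y!(j-1)\<bar>" using True beq by simp
        moreover have "\<bar>x ! (i2 - 1) - y!(j-1)\<bar> \<in> (\<lambda>(i, j). \<bar>x ! (i - 1) - y ! (j - 1)\<bar>) ` set T"
          using i2(1) by (rule rev_image_eqI) simp
        ultimately show ?thesis by blast
      next
        case False
        have "b \<le> \<bar>x ! (i1 - 1) - y!(j-1)\<bar>" using False beq by simp
        moreover have "\<bar>x ! (i1 - 1) - y!(j-1)\<bar> \<in> (\<lambda>(i, j). \<bar>x ! (i - 1) - y ! (j - 1)\<bar>) ` set T"
          using i1(1) by (rule rev_image_eqI) simp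
        ultimately show ?thesis by blast
      qed
    qed
  qed
  then show ?thesis unfolding Gf_def g_def .
qed

lemma dF_profiles:
  assumes "length y = l"
  shows "dF x y = Min (Gf y l ` profiles x l)"
proof -
  have "(\<lambda>T. Max ((\<lambda>(i, j). \<bar>x ! (i - 1) - y ! (j - 1)\<bar>) ` set T)) ` traversals (length x) (length y)
      = (Gf y l \<circ> profile x l) ` traversals (length x) l"
    using cost_eq assms by (intro image_cong) (auto simp: traversals_def)
  then show ?thesis unfolding dF_def profiles_def by (simp add: image_comp)
qed

theorem lemma9p9:
  fixes x x' y :: "real list" and l :: nat
  assumes "profiles x l = profiles x' l"
    and "length y = l"
  shows "dF x y = dF x' y"
  using dF_profiles[OF assms(2)] assms(1) by simp

end
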